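(* Let $q$, $T_q$, $P^2_q$, $\Delta$ be as in the context and let $\varepsilon:T_q\to\mathbb C$ be the continuous linear map with $\varepsilon(U^kV^\ell)=q^{k\ell/2}$ for all $k,\ell\in\mathbb Z$. Then $\varepsilon$ is a counit for $\Delta$: $(\varepsilon,\mathrm{Id})\circ\Delta=\mathrm{Id}_{T_q}=(\mathrm{Id},\varepsilon)\circ\Delta$, where $(\varepsilon,\mathrm{Id}),(\mathrm{Id},\varepsilon):P^2_q\to T_q$ are the continuous linear maps with $(\varepsilon,\mathrm{Id})(U_1^kV_1^\ell U_2^mV_2^n)=q^{k\ell/2}U^mV^n$ and $(\mathrm{Id},\varepsilon)(U_1^kV_1^\ell U_2^mV_2^n)=q^{mn/2}U^kV^\ell$.
   Context: Fix $q\in\mathbb C$ with $|q|=1$ and a square root $q^{1/2}$; $q^{r/2}:=(q^{1/2})^r$. $\mathcal S(\mathbb Z^d,\mathbb C)$ denotes the Fréchet space of complex Schwartz sequences on $\mathbb Z^d$, $\delta^a$ the sequence equal to $1$ at $a$ and $0$ elsewhere. $T_q$ is $\mathcal S(\mathbb Z^2,\mathbb C)$ with continuous multiplication $\delta^{m,n}\delta^{k,\ell}=q^{-kn}\delta^{m+k,n+\ell}$; with $U=\delta^{1,0}$, $V=\delta^{0,1}$ one has $\delta^{m,n}=U^mV^n$ and $UV=qVU$. $P^2_q$ is $\mathcal S(\mathbb Z^4,\mathbb C)$ with continuous multiplication $\delta^{k_1,\ell_1,m_1,n_1}\delta^{k_2,\ell_2,m_2,n_2}=q^{\frac{k_2n_1}{2}-k_2\ell_1-\frac{m_1\ell_2}{2}-m_1n_2}\delta^{k_1+k_2,\ell_1+\ell_2,m_1+m_2,n_1+n_2}$;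 with $U_1=\delta^{1,0,0,0}$, $V_1=\delta^{0,1,0,0}$, $U_2=\delta^{0,0,1,0}$, $V_2=\delta^{0,0,0,1}$ one has $\delta^{k,\ell,m,n}=U_1^kV_1^\ell U_2^mV_2^n$. $\Delta:T_q\to P^2_q$ is the continuous algebra homomorphism with $\Delta(U)=U_1U_2$, $\Delta(V)=V_1V_2$. *)

theory Defs
  imports "HOL-Analysis.Analysis"
begin

text \<open>Index sets: Z^2 as int \<times> int, Z^4 as int \<times> int \<times> int \<times> int.
  Elements of T_q and P^2_q are complex-valued functions on these index sets
  lying in the Schwartz space.\<close>

type_synonym idx2 = "int \<times> int"
type_synonym idx4 = "int \<times> int \<times> int \<times> int"

definition nrm2 :: "idx2 \<Rightarrow> real" where
  "nrm2 a = \<bar>real_of_int (fst a)\<bar> + \<bar>real_of_int (snd a)\<bar>"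

definition nrm4 :: "idx4 \<Rightarrow> real" where
  "nrm4 a = (case a of (k, l, m, n) \<Rightarrow>
     \<bar>real_of_int k\<bar> + \<bar>real_of_int l\<bar> + \<bar>real_of_int m\<bar> + \<bar>real_of_int n\<bar>)"

definition schwartz :: "('a \<Rightarrow> real) \<Rightarrow> ('a \<Rightarrow> complex) set" where
  "schwartz nrm = {f. \<forall>N::nat. bdd_above (range (\<lambda>a. (1 + nrm a) ^ N * cmod (f a)))}"

definition seminorm_S :: "('a \<Rightarrow> real) \<Rightarrow> nat \<Rightarrow> ('a \<Rightarrow> complex) \<Rightarrow> real" where
  "seminorm_S nrm N f = (SUP a. (1 + nrm a) ^ N * cmod (f a))"

definition delta :: "'a \<Rightarrow> 'a \<Rightarrow> complex" where
  "delta a = (\<lambda>x. if x = a then 1 else 0)"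

text \<open>Linear maps between Schwartz spaces and their continuity (for the Frechet
  topologies given by the Schwartz seminorms: the standard seminorm criterion).\<close>

definition lin_on :: "('a \<Rightarrow> complex) set \<Rightarrow> (('a \<Rightarrow> complex) \<Rightarrow> ('b \<Rightarrow> complex)) \<Rightarrow> bool" where
  "lin_on S T \<longleftrightarrow> (\<forall>f\<in>S. \<forall>g\<in>S. T (\<lambda>x. f x + g x) = (\<lambda>y. T f y + T g y)) \<and>
                   (\<forall>f\<in>S. \<forall>c. T (\<lambda>x. c * f x) = (\<lambda>y. c * T f y))"

definition cont_lin_map :: "('a \<Rightarrow> real) \<Rightarrow> ('b \<Rightarrow> real)
     \<Rightarrow> (('a \<Rightarrow> complex) \<Rightarrow> ('b \<Rightarrow> complex)) \<Rightarrow> bool" where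
  "cont_lin_map nA nB T \<longleftrightarrow>
     (\<forall>f\<in>schwartz nA. T f \<in> schwartz nB) \<and> lin_on (schwartz nA) T \<and>
     (\<forall>N. \<exists>M C. \<forall>f\<in>schwartz nA. seminorm_S nB N (T f) \<le> C * seminorm_S nA M f)"

definition cont_lin_functional :: "('a \<Rightarrow> real) \<Rightarrow> (('a \<Rightarrow> complex) \<Rightarrow> complex) \<Rightarrow> bool" where
  "cont_lin_functional nA e \<longleftrightarrow>
     (\<forall>f\<in>schwartz nA. \<forall>g\<in>schwartz nA. e (\<lambda>x. f x + g x) = e f + e g) \<and>
     (\<forall>f\<in>schwartz nA. \<forall>c. e (\<lambda>x. c * f x) = c * e f) \<and>
     (\<exists>M C. \<forall>f\<in>schwartz nA. cmod (e f) \<le> C * seminorm_S nA M f)"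

text \<open>Multiplication of T_q (qh is the fixed square root of q; q^(r/2) = qh powi r):
  delta(m,n) * delta(k,l) = q^(-kn) delta(m+k,n+l), extended as twisted convolution.\<close>

definition phaseT :: "complex \<Rightarrow> idx2 \<Rightarrow> idx2 \<Rightarrow> complex" where
  "phaseT qh a b = qh powi (- 2 * fst b * snd a)"

definition multT :: "complex \<Rightarrow> (idx2 \<Rightarrow> complex) \<Rightarrow> (idx2 \<Rightarrow> complex) \<Rightarrow> idx2 \<Rightarrow> complex" where
  "multT qh f g c = (\<Sum>\<^sub>\<infinity>a\<in>UNIV. f a * g (fst c - fst a, snd c - snd a)
                        * phaseT qh a (fst c - fst a, snd c - snd a))"

definition phaseP :: "complex \<Rightarrow> idx4 \<Rightarrow> idx4 \<Rightarrow> complex" where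
  "phaseP qh a b = (case a of (k1, l1, m1, n1) \<Rightarrow> case b of (k2, l2, m2, n2) \<Rightarrow>
      qh powi (k2 * n1 - 2 * k2 * l1 - m1 * l2 - 2 * m2 * n1))"

definition sub4 :: "idx4 \<Rightarrow> idx4 \<Rightarrow> idx4" where
  "sub4 c a = (case c of (k, l, m, n) \<Rightarrow> case a of (k', l', m', n') \<Rightarrow>
      (k - k', l - l', m - m', n - n'))"

definition multP :: "complex \<Rightarrow> (idx4 \<Rightarrow> complex) \<Rightarrow> (idx4 \<Rightarrow> complex) \<Rightarrow> idx4 \<Rightarrow> complex" where
  "multP qh f g c = (\<Sum>\<^sub>\<infinity>a\<in>UNIV. f a * g (sub4 c a) * phaseP qh a (sub4 c a))"

definition genU :: "idx2 \<Rightarrow> complex" where "genU = delta (1, 0)"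
definition genV :: "idx2 \<Rightarrow> complex" where "genV = delta (0, 1)"
definition genU1 :: "idx4 \<Rightarrow> complex" where "genU1 = delta (1, 0, 0, 0)"
definition genV1 :: "idx4 \<Rightarrow> complex" where "genV1 = delta (0, 1, 0, 0)"
definition genU2 :: "idx4 \<Rightarrow> complex" where "genU2 = delta (0, 0, 1, 0)"
definition genV2 :: "idx4 \<Rightarrow> complex" where "genV2 = delta (0, 0, 0, 1)"

end

theory Submission
  imports Defs
begin

lemma multP_delta_left:
  "multP qh (delta a) g c = g (sub4 c a) * phaseP qh a (sub4 c a)"
proof -
  have "multP qh (delta a) g c = (\<Sum>\<^sub>\<infinity>a'\<in>{a}. delta a a' * g (sub4 c a') * phaseP qh a' (sub4 c a'))"
    unfolding multP_def by (rule infsum_cong_neutral) (auto simp: delta_def)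
  also have "\<dots> = g (sub4 c a) * phaseP qh a (sub4 c a)" by (simp add: delta_def)
  finally show ?thesis .
qed

lemma multT_delta_left:
  "multT qh (delta a) g c = g (fst c - fst a, snd c - snd a) * phaseT qh a (fst c - fst a, snd c - snd a)"
proof -
  have "multT qh (delta a) g c = (\<Sum>\<^sub>\<infinity>a'\<in>{a}. delta a a' * g (fst c - fst a', snd c - snd a') * phaseT qh a' (fst c - fst a', snd c - snd a'))"
    unfolding multT_def by (rule infsum_cong_neutral) (auto simp: delta_def)
  also have "\<dots> = g (fst c - fst a, snd c - snd a) * phaseT qh a (fst c - fst a, snd c - snd a)" by (simp add: delta_def)
  finally show ?thesis .
qed

lemma sub4_eq_iff: "sub4 c a = b \<longleftrightarrow> c = (case a of (k,l,m,n) \<Rightarrow> case b of (k',l',m',n') \<Rightarrow> (k+k',l+l',m+m',n+n'))"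
  by (cases a; cases b; cases c) (auto simp: sub4_def)

lemma multP_delta_delta:
  "multP qh (delta (k,l,m,n)) (delta (k',l',m',n')) = (\<lambda>c. phaseP qh (k,l,m,n) (k',l',m',n') * delta (k+k',l+l',m+m',n+n') c)"
proof
  fix c
  show "multP qh (delta (k,l,m,n)) (delta (k',l',m',n')) c = phaseP qh (k,l,m,n) (k',l',m',n') * delta (k+k',l+l',m+m',n+n') c"
    unfolding multP_delta_left
    apply (cases c) apply (auto simp: delta_def sub4_def)
    done
qed

lemma multT_delta_delta:
  "multT qh (delta (k,l)) (delta (k',l')) = (\<lambda>c. phaseT qh (k,l) (k',l') * delta (k+k',l+l') c)"
proof
  fix c
  show "multT qh (delta (k,l)) (delta (k',l')) c = phaseT qh (k,l) (k',l') * delta (k+k',l+l') c"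
    unfolding multT_delta_left
    apply (cases c) apply (auto simp: delta_def)
    done
qed

lemma multP_delta_inj:
  assumes "qh \<noteq> 0" "multP qh (delta a) g1 = multP qh (delta a) g2"
  shows "g1 = g2"
proof
  fix x :: idx4
  obtain k l m n where a: "a = (k,l,m,n)" by (cases a) auto
  obtain k' l' m' n' where x: "x = (k',l',m',n')" by (cases x) auto
  define c where "c = (k+k',l+l',m+m',n+n')"
  have s: "sub4 c a = x" using a x c_def by (simp add: sub4_def)
  have "multP qh (delta a) g1 c = multP qh (delta a) g2 c" using assms(2) by simp
  hence "g1 x * phaseP qh a x = g2 x * phaseP qh a x" unfolding multP_delta_left s .
  moreover have "phaseP qh a x \<noteq> 0" using assms(1) by (simp add: phaseP_def a x)
  ultimately show "g1 x = g2 x" by simp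
qed

lemma finsupp_schwartz:
  assumes "finite {a. f a \<noteq> 0}"
  shows "f \<in> schwartz nrm"
  unfolding schwartz_def
proof (safe)
  fix N :: nat
  let ?h = "\<lambda>a. (1 + nrm a) ^ N * cmod (f a)"
  have "range ?h \<subseteq> insert 0 (?h ` {a. f a \<noteq> 0})" by auto
  moreover have "finite (insert 0 (?h ` {a. f a \<noteq> 0}))" using assms by simp
  ultimately show "bdd_above (range ?h)" by (meson bdd_above_finite bdd_above_mono)
qed

lemma delta_schwartz: "delta a \<in> schwartz nrm"
  by (rule finsupp_schwartz) (simp add: delta_def)

lemma Delta_delta:
  fixes \<Delta> :: "(idx2 \<Rightarrow> complex) \<Rightarrow> (idx4 \<Rightarrow> complex)"
  assumes qh0: "qh \<noteq> 0"
    and \<Delta>_mult: "\<forall>f\<in>schwartz nrm2. \<forall>g\<in>schwartz nrm2.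
                    \<Delta> (multT qh f g) = multP qh (\<Delta> f) (\<Delta> g)"
    and \<Delta>_U: "\<Delta> genU = multP qh genU1 genU2"
    and \<Delta>_V: "\<Delta> genV = multP qh genV1 genV2"
  shows "\<Delta> (delta (k, l)) = (\<lambda>c. qh powi (-(k*l)) * delta (k,l,k,l) c)"
proof -
  define Y where "Y = (\<lambda>k l. (\<lambda>c. qh powi (-(k*l)) * delta (k,l,k,l) c))"
  have hU: "\<Delta> genU = delta (1,0,1,0)"
    using \<Delta>_U by (simp add: genU1_def genU2_def multP_delta_delta phaseP_def)
  have hV: "\<Delta> genV = delta (0,1,0,1)"
    using \<Delta>_V by (simp add: genV1_def genV2_def multP_delta_delta phaseP_def)
  have stepU: "\<Delta> (delta (k+1,l)) = multP qh (delta (1,0,1,0)) (\<Delta> (delta (k,l)))" for k l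
  proof -
    have "multT qh genU (delta (k,l)) = delta (k+1,l)"
      by (simp add: genU_def multT_delta_delta phaseT_def add.commute)
    thus ?thesis using \<Delta>_mult delta_schwartz hU unfolding genU_def by metis
  qed
  have stepV: "\<Delta> (delta (0,l+1)) = multP qh (delta (0,1,0,1)) (\<Delta> (delta (0,l)))" for l
  proof -
    have "multT qh genV (delta (0,l)) = delta (0,l+1)"
      by (simp add: genV_def multT_delta_delta phaseT_def add.commute)
    thus ?thesis using \<Delta>_mult delta_schwartz hV unfolding genV_def by metis
  qed
  have YU: "multP qh (delta (1,0,1,0)) (Y k l) = Y (k+1) l" for k l
  proof
    fix c :: idx4
    obtain a b c' d where c: "c = (a,b,c',d)" by (cases c) auto
    have e: "qh powi (-(k*l)) * qh powi (-l) = qh powi (-((k+1)*l))"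
      using qh0 by (simp add: power_int_add[symmetric] algebra_simps)
    show "multP qh (delta (1,0,1,0)) (Y k l) c = Y (k+1) l c"
      unfolding multP_delta_left Y_def c
      by (auto simp: delta_def sub4_def phaseP_def e)
  qed
  have YV: "multP qh (delta (0,1,0,1)) (Y 0 l) = Y 0 (l+1)" for l
  proof
    fix c :: idx4
    obtain a b c' d where c: "c = (a,b,c',d)" by (cases c) auto
    show "multP qh (delta (0,1,0,1)) (Y 0 l) c = Y 0 (l+1) c"
      unfolding multP_delta_left Y_def c
      by (auto simp: delta_def sub4_def phaseP_def)
  qed
  have Y00: "Y 0 0 = delta (0,0,0,0)" by (simp add: Y_def)
  have base: "\<Delta> (delta (0,0)) = Y 0 0"
  proof -
    have "multP qh (delta (1,0,1,0)) (\<Delta> (delta (0,0))) = multP qh (delta (1,0,1,0)) (Y 0 0)"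
      using stepU[of 0 0] hU YU[of 0 0] unfolding genU_def Y_def by simp
    thus ?thesis using multP_delta_inj qh0 by blast
  qed
  have col: "\<Delta> (delta (0,l)) = Y 0 l" for l
  proof (induction l rule: int_induct[where k=0])
    case base then show ?case using \<open>\<Delta> (delta (0,0)) = Y 0 0\<close> by simp
  next
    case (step1 i) then show ?case using stepV YV by simp
  next
    case (step2 i)
    have "multP qh (delta (0,1,0,1)) (\<Delta> (delta (0,i-1))) = multP qh (delta (0,1,0,1)) (Y 0 (i-1))"
      using stepV[of "i-1"] YV[of "i-1"] step2 by simp
    thus ?case using multP_delta_inj qh0 by blast
  qed
  have "\<Delta> (delta (k,l)) = Y k l"
  proof (induction k rule: int_induct[where k=0])
    case base then show ?case using col by simp
  next
    case (step1 i) then show ?case using stepU YU by simp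
  next
    case (step2 i)
    have "multP qh (delta (1,0,1,0)) (\<Delta> (delta (i-1,l))) = multP qh (delta (1,0,1,0)) (Y (i-1) l)"
      using stepU[of "i-1"] YU[of "i-1"] step2 by simp
    thus ?case using multP_delta_inj qh0 by blast
  qed
  thus ?thesis by (simp add: Y_def)
qed

lemma nrm2_nonneg: "nrm2 a \<ge> 0" by (simp add: nrm2_def)
lemma nrm4_nonneg: "nrm4 a \<ge> 0" by (cases a) (simp add: nrm4_def)

lemma schwartz_bound:
  assumes "h \<in> schwartz nrm"
  obtains B where "\<And>a. (1 + nrm a) ^ N * cmod (h a) \<le> B"
  using assms unfolding schwartz_def bdd_above_def by blast

lemma seminorm_upper:
  assumes "h \<in> schwartz nrm"
  shows "(1 + nrm a) ^ N * cmod (h a) \<le> seminorm_S nrm N h"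
  unfolding seminorm_S_def
  by (rule cSUP_upper) (use assms in \<open>auto simp: schwartz_def\<close>)

lemma seminorm_nonneg:
  assumes "h \<in> schwartz nrm" "\<And>a. nrm a \<ge> 0"
  shows "0 \<le> seminorm_S nrm N h"
proof -
  fix a
  have "0 \<le> (1 + nrm a) ^ N * cmod (h a)" using assms(2)[of a] by simp
  also have "\<dots> \<le> seminorm_S nrm N h" by (rule seminorm_upper[OF assms(1)])
  finally show ?thesis .
qed

lemma cmod_le_seminorm0:
  assumes "h \<in> schwartz nrm"
  shows "cmod (h x) \<le> seminorm_S nrm 0 h"
  using seminorm_upper[OF assms, where N=0 and a=x] by simp

lemma lin_add: "lin_on S T \<Longrightarrow> f \<in> S \<Longrightarrow> g \<in> S \<Longrightarrow> T (\<lambda>x. f x + g x) = (\<lambda>y. T f y + T g y)"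
  unfolding lin_on_def by blast

lemma lin_scal: "lin_on S T \<Longrightarrow> f \<in> S \<Longrightarrow> T (\<lambda>x. c * f x) = (\<lambda>y. c * T f y)"
  unfolding lin_on_def by blast

lemma lin_sum:
  assumes lin: "lin_on (schwartz nrm) T" and fx: "\<And>a. T (delta a) = delta a"
    and "finite A"
  shows "T (\<lambda>x. \<Sum>a\<in>A. c a * delta a x) = (\<lambda>x. \<Sum>a\<in>A. c a * delta a x)"
  using \<open>finite A\<close>
proof (induction A rule: finite_induct)
  case empty
  have "T (\<lambda>x. 0 * delta b x) = (\<lambda>y. 0 * T (delta b) y)" for b
    by (rule lin_scal[OF lin delta_schwartz])
  then show ?case by simp
next
  case (insert b A)
  let ?s = "\<lambda>x. \<Sum>a\<in>A. c a * delta a x"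
  have sub: "{x. ?s x \<noteq> 0} \<subseteq> A"
  proof
    fix x assume x: "x \<in> {x. ?s x \<noteq> 0}"
    show "x \<in> A"
    proof (rule ccontr)
      assume "x \<notin> A"
      hence "?s x = 0" by (intro sum.neutral) (auto simp: delta_def)
      with x show False by simp
    qed
  qed
  have s1: "?s \<in> schwartz nrm"
    by (rule finsupp_schwartz, rule finite_subset[OF sub insert(1)])
  have s2: "(\<lambda>x. c b * delta b x) \<in> schwartz nrm"
    by (rule finsupp_schwartz, rule finite_subset[of _ "{b}"]) (auto simp: delta_def)
  have "T (\<lambda>x. c b * delta b x + ?s x) = (\<lambda>y. T (\<lambda>x. c b * delta b x) y + T ?s y)"
    by (rule lin_add[OF lin s2 s1])
  moreover have "T (\<lambda>x. c b * delta b x) = (\<lambda>y. c b * T (delta b) y)"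
    by (rule lin_scal[OF lin delta_schwartz])
  ultimately show ?case using insert fx by (simp add: sum.insert)
qed

lemma box_finite: "finite {a::idx2. nrm2 a \<le> R}"
proof -
  let ?r = "\<lceil>R\<rceil>"
  have "{a::idx2. nrm2 a \<le> R} \<subseteq> {-?r..?r} \<times> {-?r..?r}"
  proof
    fix a :: idx2 assume "a \<in> {a. nrm2 a \<le> R}"
    hence "\<bar>real_of_int (fst a)\<bar> \<le> R" "\<bar>real_of_int (snd a)\<bar> \<le> R"
      by (auto simp: nrm2_def)
    hence "real_of_int \<bar>fst a\<bar> \<le> real_of_int ?r" "real_of_int \<bar>snd a\<bar> \<le> real_of_int ?r"
      using le_of_int_ceiling[of R] unfolding of_int_abs by linarith+
    hence "\<bar>fst a\<bar> \<le> ?r" "\<bar>snd a\<bar> \<le> ?r" by (simp_all only: of_int_le_iff)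
    hence "-?r \<le> fst a" "fst a \<le> ?r" "-?r \<le> snd a" "snd a \<le> ?r" by linarith+
    thus "a \<in> {-?r..?r} \<times> {-?r..?r}" unfolding mem_Times_iff atLeastAtMost_iff by blast
  qed
  moreover have "finite ({-?r..?r} \<times> {-?r..?r})" by (intro finite_cartesian_product finite_atLeastAtMost_int)
  ultimately show ?thesis by (rule finite_subset)
qed

lemma density:
  fixes T :: "(idx2 \<Rightarrow> complex) \<Rightarrow> (idx2 \<Rightarrow> complex)"
  assumes lin: "lin_on (schwartz nrm2) T"
    and into: "\<forall>f\<in>schwartz nrm2. T f \<in> schwartz nrm2"
    and bnd: "\<forall>f\<in>schwartz nrm2. seminorm_S nrm2 0 (T f) \<le> C * seminorm_S nrm2 M f"
    and C0: "C \<ge> 0"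
    and fx: "\<And>a. T (delta a) = delta a"
    and f: "f \<in> schwartz nrm2"
  shows "T f = f"
proof
  fix x
  obtain B where B: "\<And>a. (1 + nrm2 a) ^ (Suc M) * cmod (f a) \<le> B"
    using schwartz_bound[OF f] by blast
  have B0: "B \<ge> 0" using B[of x] nrm2_nonneg[of x]
  proof -
    have "0 \<le> (1 + nrm2 x) ^ (Suc M) * cmod (f x)" using nrm2_nonneg[of x] by simp
    thus ?thesis using B[of x] by linarith
  qed
  have key: "cmod (T f x - f x) \<le> C * (B / (1 + R))" if R: "R \<ge> nrm2 x" for R
  proof -
    have R0: "R \<ge> 0" using R nrm2_nonneg[of x] by linarith
    define g where "g = (\<lambda>a. if nrm2 a \<le> R then 0 else f a)"
    define fR where "fR = (\<lambda>x. \<Sum>a\<in>{a. nrm2 a \<le> R}. f a * delta a x)"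
    have fR_eq: "fR y = (if nrm2 y \<le> R then f y else 0)" for y
    proof -
      have "fR y = (\<Sum>a\<in>{a. nrm2 a \<le> R}. if a = y then f a else 0)"
        unfolding fR_def by (rule sum.cong) (auto simp: delta_def)
      also have "\<dots> = (if nrm2 y \<le> R then f y else 0)"
        by (subst sum.delta) (simp_all add: box_finite)
      finally show ?thesis .
    qed
    have fsplit: "f = (\<lambda>y. g y + fR y)" by (auto simp: g_def fR_eq)
    have gS: "g \<in> schwartz nrm2"
      unfolding schwartz_def
    proof safe
      fix N
      obtain Bn where Bn: "\<And>a. (1 + nrm2 a) ^ N * cmod (f a) \<le> Bn"
        using schwartz_bound[OF f] by blast
      have "(1 + nrm2 a) ^ N * cmod (g a) \<le> Bn" for a
      proof -
        have "0 \<le> (1 + nrm2 a) ^ N * cmod (f a)" using nrm2_nonneg[of a] by simp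
        thus ?thesis using Bn[of a] by (auto simp: g_def)
      qed
      thus "bdd_above (range (\<lambda>a. (1 + nrm2 a) ^ N * cmod (g a)))" by (intro bdd_aboveI2) blast
    qed
    have fRS: "fR \<in> schwartz nrm2"
      by (rule finsupp_schwartz, rule finite_subset[OF _ box_finite[of R]]) (auto simp: fR_eq)
    have H: "T (\<lambda>y. g y + fR y) = (\<lambda>y. T g y + T fR y)" by (rule lin_add[OF lin gS fRS])
    have Tf: "T f = (\<lambda>y. T g y + T fR y)" using H fsplit by simp
    have TfR: "T fR = fR" unfolding fR_def by (rule lin_sum[OF lin fx box_finite])
    have fx': "f x = g x + fR x" using fun_cong[OF fsplit, of x] by simp
    have "T f x = T g x + fR x" using Tf TfR by simp
    moreover have "g x = 0" using R by (simp add: g_def)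
    ultimately have "T f x - f x = T g x" using fx' by simp
    hence "cmod (T f x - f x) = cmod (T g x)" by simp
    have TgS: "T g \<in> schwartz nrm2" using into gS by (rule bspec)
    have "cmod (T f x - f x) = cmod (T g x)" by fact
    also have "\<dots> \<le> seminorm_S nrm2 0 (T g)" by (rule cmod_le_seminorm0[OF TgS])
    also have "\<dots> \<le> C * seminorm_S nrm2 M g" using bnd gS by (rule bspec)
    also have "seminorm_S nrm2 M g \<le> B / (1 + R)"
      unfolding seminorm_S_def
    proof (rule cSUP_least)
      fix a
      show "(1 + nrm2 a) ^ M * cmod (g a) \<le> B / (1 + R)"
      proof (cases "nrm2 a \<le> R")
        case True thus ?thesis using B0 R0 by (simp add: g_def)
      next
        case False
        hence pos: "1 + nrm2 a > 1 + R" by simp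
        have "(1 + nrm2 a) ^ M * cmod (f a) * (1 + nrm2 a) \<le> B" using B[of a] by (simp add: algebra_simps)
        moreover have "(1 + nrm2 a) ^ M * cmod (f a) * (1 + R) \<le> (1 + nrm2 a) ^ M * cmod (f a) * (1 + nrm2 a)"
          using pos nrm2_nonneg[of a] by (intro mult_left_mono) auto
        ultimately have "(1 + nrm2 a) ^ M * cmod (f a) * (1 + R) \<le> B" by linarith
        hence "(1 + nrm2 a) ^ M * cmod (f a) \<le> B / (1 + R)" using R0 by (simp add: pos_le_divide_eq)
        thus ?thesis using False by (simp add: g_def)
      qed
    qed simp
    hence "C * seminorm_S nrm2 M g \<le> C * (B / (1 + R))" using C0 by (rule mult_left_mono)
    finally show ?thesis .
  qed
  show "T f x = f x"
  proof (rule ccontr)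
    assume "T f x \<noteq> f x"
    hence d: "cmod (T f x - f x) > 0" by simp
    define d' where "d' = cmod (T f x - f x)"
    define R where "R = max (nrm2 x) (C * B / d')"
    have dp: "d' > 0" using d unfolding d'_def .
    have "C * B / d' \<le> R" unfolding R_def by simp
    hence "C * B \<le> R * d'" using dp by (simp add: pos_divide_le_eq)
    hence lt: "C * B < d' * (1 + R)" using dp by (simp add: algebra_simps)
    have R0: "0 < 1 + R" using nrm2_nonneg[of x] unfolding R_def by linarith
    have "C * (B / (1 + R)) < d'" using lt R0 by (simp add: pos_divide_less_eq)
    moreover have "cmod (T f x - f x) \<le> C * (B / (1 + R))" by (rule key) (simp add: R_def)
    ultimately show False unfolding d'_def by simp
  qed
qed

lemma comp_fixed:
  fixes \<Delta> :: "(idx2 \<Rightarrow> complex) \<Rightarrow> (idx4 \<Rightarrow> complex)"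
    and E :: "(idx4 \<Rightarrow> complex) \<Rightarrow> (idx2 \<Rightarrow> complex)"
  assumes qh0: "qh \<noteq> 0"
    and Dd: "\<And>k l. \<Delta> (delta (k, l)) = (\<lambda>c. qh powi (-(k*l)) * delta (k,l,k,l) c)"
    and Dc: "cont_lin_map nrm2 nrm4 \<Delta>"
    and Ec: "cont_lin_map nrm4 nrm2 E"
    and Ev: "\<And>k l. E (delta (k,l,k,l)) = (\<lambda>x. qh powi (k*l) * delta (k,l) x)"
    and f: "f \<in> schwartz nrm2"
  shows "E (\<Delta> f) = f"
proof -
  have Dinto: "\<forall>f\<in>schwartz nrm2. \<Delta> f \<in> schwartz nrm4" and Dlin: "lin_on (schwartz nrm2) \<Delta>"
    and Dbnd: "\<forall>N. \<exists>M C. \<forall>f\<in>schwartz nrm2. seminorm_S nrm4 N (\<Delta> f) \<le> C * seminorm_S nrm2 M f"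
    using Dc unfolding cont_lin_map_def by auto
  have Einto: "\<forall>f\<in>schwartz nrm4. E f \<in> schwartz nrm2" and Elin: "lin_on (schwartz nrm4) E"
    and Ebnd: "\<forall>N. \<exists>M C. \<forall>f\<in>schwartz nrm4. seminorm_S nrm2 N (E f) \<le> C * seminorm_S nrm4 M f"
    using Ec unfolding cont_lin_map_def by auto
  obtain M1 C1 where E0: "\<forall>f\<in>schwartz nrm4. seminorm_S nrm2 0 (E f) \<le> C1 * seminorm_S nrm4 M1 f"
    using Ebnd by blast
  obtain M2 C2 where D1: "\<forall>f\<in>schwartz nrm2. seminorm_S nrm4 M1 (\<Delta> f) \<le> C2 * seminorm_S nrm2 M2 f"
    using Dbnd by blast
  show ?thesis
  proof (rule density[where T="\<lambda>f. E (\<Delta> f)" and C="max C1 0 * max C2 0" and M=M2])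
    show "lin_on (schwartz nrm2) (\<lambda>f. E (\<Delta> f))"
      unfolding lin_on_def
    proof safe
      fix f g assume fg: "f \<in> schwartz nrm2" "g \<in> schwartz nrm2"
      have "\<Delta> (\<lambda>x. f x + g x) = (\<lambda>y. \<Delta> f y + \<Delta> g y)" by (rule lin_add[OF Dlin fg])
      moreover have "E (\<lambda>y. \<Delta> f y + \<Delta> g y) = (\<lambda>z. E (\<Delta> f) z + E (\<Delta> g) z)"
        by (rule lin_add[OF Elin]) (use Dinto fg in blast)+
      ultimately show "E (\<Delta> (\<lambda>x. f x + g x)) = (\<lambda>y. E (\<Delta> f) y + E (\<Delta> g) y)" by simp
    next
      fix f c assume fg: "f \<in> schwartz nrm2"
      have "\<Delta> (\<lambda>x. c * f x) = (\<lambda>y. c * \<Delta> f y)" by (rule lin_scal[OF Dlin fg])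
      moreover have "E (\<lambda>y. c * \<Delta> f y) = (\<lambda>z. c * E (\<Delta> f) z)"
        by (rule lin_scal[OF Elin]) (use Dinto fg in blast)
      ultimately show "E (\<Delta> (\<lambda>x. c * f x)) = (\<lambda>y. c * E (\<Delta> f) y)" by simp
    qed
    show "\<forall>f\<in>schwartz nrm2. E (\<Delta> f) \<in> schwartz nrm2" using Dinto Einto by blast
    show "\<forall>f\<in>schwartz nrm2. seminorm_S nrm2 0 (E (\<Delta> f)) \<le> max C1 0 * max C2 0 * seminorm_S nrm2 M2 f"
    proof
      fix f assume fS: "f \<in> schwartz nrm2"
      have s1: "0 \<le> seminorm_S nrm4 M1 (\<Delta> f)" using seminorm_nonneg Dinto fS nrm4_nonneg by blast
      have s2: "0 \<le> seminorm_S nrm2 M2 f" using seminorm_nonneg fS nrm2_nonneg by blast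
      have "seminorm_S nrm2 0 (E (\<Delta> f)) \<le> C1 * seminorm_S nrm4 M1 (\<Delta> f)" using E0 Dinto fS by blast
      also have "\<dots> \<le> max C1 0 * seminorm_S nrm4 M1 (\<Delta> f)" using s1 by (intro mult_right_mono) auto
      also have "\<dots> \<le> max C1 0 * (max C2 0 * seminorm_S nrm2 M2 f)"
      proof (intro mult_left_mono)
        have "seminorm_S nrm4 M1 (\<Delta> f) \<le> C2 * seminorm_S nrm2 M2 f" using D1 fS by blast
        also have "\<dots> \<le> max C2 0 * seminorm_S nrm2 M2 f" using s2 by (intro mult_right_mono) auto
        finally show "seminorm_S nrm4 M1 (\<Delta> f) \<le> max C2 0 * seminorm_S nrm2 M2 f" .
      qed auto
      finally show "seminorm_S nrm2 0 (E (\<Delta> f)) \<le> max C1 0 * max C2 0 * seminorm_S nrm2 M2 f"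
        by (simp add: mult.assoc)
    qed
    show "0 \<le> max C1 0 * max C2 0" by simp
    show "E (\<Delta> (delta a)) = delta a" for a
    proof -
      obtain k l where a: "a = (k,l)" by (cases a) auto
      have "E (\<Delta> (delta a)) = E (\<lambda>c. qh powi (-(k*l)) * delta (k,l,k,l) c)" using Dd a by simp
      also have "\<dots> = (\<lambda>y. qh powi (-(k*l)) * E (delta (k,l,k,l)) y)"
        by (rule lin_scal[OF Elin delta_schwartz])
      also have "\<dots> = (\<lambda>y. (qh powi (-(k*l)) * qh powi (k*l)) * delta (k,l) y)"
        using Ev by (simp add: mult.assoc)
      also have "qh powi (-(k*l)) * qh powi (k*l) = 1"
        using qh0 by (simp add: power_int_minus)
      finally show ?thesis using a by simp
    qed
    show "f \<in> schwartz nrm2" by (rule f)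
  qed
qed

theorem mainTheorem3:
  fixes q qh :: complex
    and \<Delta> :: "(idx2 \<Rightarrow> complex) \<Rightarrow> (idx4 \<Rightarrow> complex)"
    and \<epsilon> :: "(idx2 \<Rightarrow> complex) \<Rightarrow> complex"
    and \<epsilon>Id IdEps :: "(idx4 \<Rightarrow> complex) \<Rightarrow> (idx2 \<Rightarrow> complex)"
  assumes hq: "cmod q = 1"
    and hqh: "qh ^ 2 = q"
    and \<Delta>_cont: "cont_lin_map nrm2 nrm4 \<Delta>"
    and \<Delta>_mult: "\<forall>f\<in>schwartz nrm2. \<forall>g\<in>schwartz nrm2.
                    \<Delta> (multT qh f g) = multP qh (\<Delta> f) (\<Delta> g)"
    and \<Delta>_U: "\<Delta> genU = multP qh genU1 genU2"
    and \<Delta>_V: "\<Delta> genV = multP qh genV1 genV2"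
    and \<epsilon>_cont: "cont_lin_functional nrm2 \<epsilon>"
    and \<epsilon>_val: "\<forall>k l. \<epsilon> (delta (k, l)) = qh powi (k * l)"
    and \<epsilon>Id_cont: "cont_lin_map nrm4 nrm2 \<epsilon>Id"
    and \<epsilon>Id_val: "\<forall>k l m n. \<epsilon>Id (delta (k, l, m, n)) = (\<lambda>x. qh powi (k * l) * delta (m, n) x)"
    and IdEps_cont: "cont_lin_map nrm4 nrm2 IdEps"
    and IdEps_val: "\<forall>k l m n. IdEps (delta (k, l, m, n)) = (\<lambda>x. qh powi (m * n) * delta (k, l) x)"
  shows "\<forall>f\<in>schwartz nrm2. \<epsilon>Id (\<Delta> f) = f \<and> IdEps (\<Delta> f) = f"
proof -
  have qh0: "qh \<noteq> 0" using hq hqh by auto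
  have Dd: "\<And>k l. \<Delta> (delta (k, l)) = (\<lambda>c. qh powi (-(k*l)) * delta (k,l,k,l) c)"
    by (rule Delta_delta[OF qh0 \<Delta>_mult \<Delta>_U \<Delta>_V])
  show ?thesis
  proof safe
    fix f assume f: "f \<in> schwartz nrm2"
    show "\<epsilon>Id (\<Delta> f) = f"
      by (rule comp_fixed[OF qh0 Dd \<Delta>_cont \<epsilon>Id_cont _ f]) (use \<epsilon>Id_val in simp)
    show "IdEps (\<Delta> f) = f"
      by (rule comp_fixed[OF qh0 Dd \<Delta>_cont IdEps_cont _ f]) (use IdEps_val in simp)
  qed
qed

end
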